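(* Let $T>0$ and $G\subset\mathbb{R}^d$ a bounded domain with $C^3$ boundary and unit inward normal $\nu$. Let $b:[0,T]\times\bar G\times\mathcal P(\bar G)\to\mathbb{R}^d$, $\sigma:[0,T]\times\bar G\times\mathcal P(\bar G)\to\mathbb{R}^{d\times d}$ be continuous in $t$ and suppose there are $L>0$ and continuous functions $\phi_j:[0,T]\times\bar G\times\bar G\to\mathbb{R}$, $j=1,\dots,J$, with $|\phi_j(t,x,y)-\phi_j(t,x,z)|\le C|y-z|$, such that for all $t$, $x,y\in\bar G$, $\mu_1,\mu_2\in\mathcal P(\bar G)$, $$|b(t,x,\mu_1)-b(t,y,\mu_2)|+|\sigma(t,x,\mu_1)-\sigma(t,y,\mu_2)|\le L\Big(|x-y|+\sum_{j=1}^J\Big|\int_{\bar G}\phi_j(t,x,z)\,d\mu_1(z)-\int_{\bar G}\phi_j(t,x,z)\,d\mu_2(z)\Big|\Big).$$ Let $W^1,\dots,W^N$ be independent standard $d$-dimensional Wiener processes, let $X^1(0),\dots,X^N(0)$ be i.i.d. $\bar G$-valued, independent of the $W^i$. Let $X^i$ be the solution of the reflected McKean–Vlasov SDE $$X^i(t)=X^i(0)+\int_0^t b(s,X^i(s),\mathcal L^X_s)ds+\int_0^t\sigma(s,X^i(s),\mathcal L^X_s)dW^i(s)+\int_0^t\nu(X^i(s))\,dL^i(s)$$ (with $X^i(t)\in\bar G$ and $L^i$ non-decreasing, $L^i(0)=0$, increasing only when $X^i\in\partial G$), where $\mathcal L^X_s$ is the common law of $X^i(s)$; and let $X^{i,N}$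 solve the interacting particle system $$X^{i,N}(t)=X^i(0)+\int_0^t b(s,X^{i,N}(s),\hat\mu_{\mathbf X^N(s)})ds+\int_0^t\sigma(s,X^{i,N}(s),\hat\mu_{\mathbf X^N(s)})dW^i(s)+\int_0^t\nu(X^{i,N}(s))\,dL^{i,N}(s)$$ with analogous reflection terms. Then there is $C>0$ independent of $N$ such that for all $t\in[0,T]$ and $i=1,\dots,N$: $$\mathbb E|b(t,X^{i,N}(t),\hat\mu_{\mathbf X^N(t)})-b(t,X^i(t),\hat\mu_{\mathbf X(t)})|^4+\mathbb E|\sigma(t,X^{i,N}(t),\hat\mu_{\mathbf X^N(t)})-\sigma(t,X^i(t),\hat\mu_{\mathbf X(t)})|^4\le C\Big(\mathbb E|X^{i,N}(t)-X^i(t)|^4+\frac1N\sum_{j=1}^N\mathbb E|X^{j,N}(t)-X^j(t)|^4\Big),$$ and $$\mathbb E|b(t,X^i(t),\hat\mu_{\mathbf X(t)})-b(t,X^i(t),\mathcal L^X_t)|^4+\mathbb E|\sigma(t,X^i(t),\hat\mu_{\mathbf X(t)})-\sigma(t,X^i(t),\mathcal L^X_t)|^4\le\frac{C}{N^2}.$$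
   Context: $\mathbf X^N(t)=(X^{1,N}(t),\dots,X^{N,N}(t))$, $\mathbf X(t)=(X^1(t),\dots,X^N(t))$, and for $Z=(Z^1,\dots,Z^N)$, $\hat\mu_Z=\frac1N\sum_{i=1}^N\delta_{Z^i}$ is the empirical measure. $\mathcal P(\bar G)$ is the set of Borel probability measures on $\bar G$. *)

theory Defs
  imports "HOL-Probability.Probability"
begin

text \<open>Borel probability measures on a set S (here S = closure G), represented as
  Borel probability measures on the ambient space giving full mass to S.\<close>
definition prob_on :: "'a::topological_space set \<Rightarrow> 'a measure set" where
  "prob_on S = {\<mu>. prob_space \<mu> \<and> sets \<mu> = sets borel \<and> emeasure \<mu> S = 1}"

text \<open>Empirical measure (1/N) sum_{i=1}^N delta_{Z i}: push-forward of the uniform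
  distribution on the indices 1..N under Z.\<close>
definition empirical :: "nat \<Rightarrow> (nat \<Rightarrow> 'a::topological_space) \<Rightarrow> 'a measure" where
  "empirical N Z = distr (measure_pmf (pmf_of_set {1..N})) borel Z"

end

theory Submission
  imports Defs
begin

lemma (in prob_space) zero_lemma:
  fixes X :: "nat \<Rightarrow> 'a \<Rightarrow> 'b::topological_space" and \<psi> :: "'b \<Rightarrow> 'b \<Rightarrow> real"
  assumes indep: "indep_vars (\<lambda>_. borel) X I"
    and ident: "distr M borel (X a) = Lw"
    and psi[measurable]: "(\<lambda>(x,z). \<psi> x z) \<in> borel_measurable (borel \<Otimes>\<^sub>M borel)"
    and psib: "\<And>x z. \<bar>\<psi> x z\<bar> \<le> K"
    and F[measurable]: "F \<in> borel_measurable (PiM S (\<lambda>_. borel))" and Fb: "\<And>v. \<bar>F v\<bar> \<le> B"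
    and aI: "a \<in> I" and SI: "S \<subseteq> I" and aS: "a \<notin> S" and iS: "i \<in> S"
  shows "(\<integral>\<omega>. (\<psi> (X i \<omega>) (X a \<omega>) - (\<integral>z. \<psi> (X i \<omega>) z \<partial>Lw)) * F (restrict (\<lambda>m. X m \<omega>) S) \<partial>M) = 0"
proof -
  define V where "V = (\<lambda>\<omega>. restrict (\<lambda>m. X m \<omega>) S)"
  define PS where "PS = PiM S (\<lambda>_::nat. (borel :: 'b measure))"
  have ind1: "indep_var (PiM {a} (\<lambda>_. borel)) (\<lambda>\<omega>. restrict (\<lambda>m. X m \<omega>) {a}) PS V"
    unfolding V_def PS_def by (rule indep_var_restrict[OF indep]) (use aI SI aS in auto)
  define U where "U = (\<lambda>\<omega>. restrict (\<lambda>m. X m \<omega>) {a})"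
  define PA where "PA = PiM {a} (\<lambda>_::nat. (borel :: 'b measure))"
  have ind: "indep_var PA U PS V" using ind1 unfolding U_def PA_def .
  have rvU[measurable]: "U \<in> measurable M PA" and rvV[measurable]: "V \<in> measurable M PS"
    and prodeq: "distr M PA U \<Otimes>\<^sub>M distr M PS V = distr M (PA \<Otimes>\<^sub>M PS) (\<lambda>x. (U x, V x))"
    using ind unfolding indep_var_distribution_eq by auto
  have rvXa[measurable]: "X a \<in> borel_measurable M"
    using indep aI unfolding indep_vars_def by auto
  define DU where "DU = distr M PA U"
  interpret DU: prob_space DU unfolding DU_def by (simp add: prob_space_distr)
  define DV where "DV = distr M PS V"
  interpret Lw: prob_space Lw using ident[symmetric] by (simp add: prob_space_distr)
  interpret DV: prob_space DV unfolding DV_def by (simp add: prob_space_distr)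
  interpret P: pair_prob_space DU DV ..
  have setsLw: "sets Lw = sets borel" using ident[symmetric] by simp
  have psiLw: "(\<lambda>(x,z). \<psi> x z) \<in> borel_measurable (borel \<Otimes>\<^sub>M Lw)"
    using psi by (simp cong: measurable_cong_sets[OF sets_pair_measure_cong[OF refl setsLw]])
  define h where "h = (\<lambda>x. \<integral>z. \<psi> x z \<partial>Lw)"
  have h[measurable]: "h \<in> borel_measurable borel"
    unfolding h_def by (rule Lw.borel_measurable_lebesgue_integral) (use psiLw in simp)
  have psix[measurable]: "(\<lambda>z. \<psi> x z) \<in> borel_measurable borel" for x
  proof -
    have "(\<lambda>z. (\<lambda>(x,z). \<psi> x z) (x, z)) \<in> borel_measurable borel" by measurable
    then show ?thesis by simp
  qed
  define g where "g = (\<lambda>(u::nat\<Rightarrow>'b, v::nat\<Rightarrow>'b). (\<psi> (v i) (u a) - h (v i)) * F v)"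
  have g[measurable]: "g \<in> borel_measurable (PA \<Otimes>\<^sub>M PS)"
    unfolding g_def PS_def PA_def using iS by measurable
  have hb: "\<bar>h y\<bar> \<le> K" for y
  proof -
    have "\<bar>h y\<bar> \<le> (\<integral>z. \<bar>\<psi> y z\<bar> \<partial>Lw)" unfolding h_def by (rule integral_abs_bound)
    also have "\<dots> \<le> (\<integral>z. K \<partial>Lw)"
      by (intro integral_mono) (auto intro!: Lw.integrable_const_bound[where B=K] psib simp: measurable_cong_sets[OF setsLw])
    finally show ?thesis by (simp add: Lw.prob_space)
  qed
  have "(\<integral>\<omega>. (\<psi> (X i \<omega>) (X a \<omega>) - (\<integral>z. \<psi> (X i \<omega>) z \<partial>Lw)) * F (restrict (\<lambda>m. X m \<omega>) S) \<partial>M)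
      = (\<integral>\<omega>. g (U \<omega>, V \<omega>) \<partial>M)"
    using iS by (intro Bochner_Integration.integral_cong) (auto simp: g_def V_def U_def h_def)
  also have "\<dots> = integral\<^sup>L (distr M (PA \<Otimes>\<^sub>M PS) (\<lambda>x. (U x, V x))) g"
    by (rule integral_distr[symmetric]) auto
  also have "\<dots> = integral\<^sup>L (DU \<Otimes>\<^sub>M DV) g"
    using prodeq by (simp add: DV_def DU_def)
  also have "\<dots> = (\<integral>v. (\<integral>u. g (u, v) \<partial>DU) \<partial>DV)"
  proof -
    have gm: "g \<in> borel_measurable (DU \<Otimes>\<^sub>M DV)"
      using g by (simp add: DV_def DU_def)
    have "integrable (DU \<Otimes>\<^sub>M DV) g"
    proof (rule P.integrable_const_bound[where B="(K + K) * B"])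
      show "AE x in DU \<Otimes>\<^sub>M DV. norm (g x) \<le> (K + K) * B"
      proof (intro AE_I2)
        fix x :: "(nat \<Rightarrow> 'b) \<times> (nat \<Rightarrow> 'b)"
        obtain u v where x: "x = (u, v)" by (cases x)
        have "\<bar>\<psi> (v i) (u a) - h (v i)\<bar> \<le> K + K" using psib[of "v i" "u a"] hb[of "v i"] by linarith
        moreover have "0 \<le> K + K" using psib[of "v i" "u a"] by linarith
        ultimately show "norm (g x) \<le> (K + K) * B"
          unfolding x g_def by (simp add: abs_mult mult_mono Fb)
      qed
    qed (use gm in simp)
    then show ?thesis using P.integral_snd[of "\<lambda>u v. g (u, v)"] by simp
  qed
  also have "\<dots> = (\<integral>v. 0 \<partial>DV)"
  proof (intro Bochner_Integration.integral_cong refl)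
    fix v :: "nat \<Rightarrow> 'b"
    have "(\<integral>u. g (u, v) \<partial>DU) = (\<integral>u. (\<psi> (v i) (u a) - h (v i)) \<partial>DU) * F v"
      unfolding g_def by simp
    also have "(\<integral>u. (\<psi> (v i) (u a) - h (v i)) \<partial>DU) = (\<integral>\<omega>. (\<psi> (v i) (U \<omega> a) - h (v i)) \<partial>M)"
      unfolding DU_def by (rule integral_distr) (use rvU in \<open>auto simp: PA_def\<close>)
    also have "\<dots> = (\<integral>\<omega>. (\<psi> (v i) (X a \<omega>) - h (v i)) \<partial>M)"
      by (simp add: U_def)
    also have "\<dots> = (\<integral>z. (\<psi> (v i) z - h (v i)) \<partial>distr M borel (X a))"
      by (rule integral_distr[symmetric]) auto
    also have "\<dots> = (\<integral>z. (\<psi> (v i) z - h (v i)) \<partial>Lw)" using ident by simp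
    also have "\<dots> = (\<integral>z. \<psi> (v i) z \<partial>Lw) - (\<integral>z. h (v i) \<partial>Lw)"
      by (rule Bochner_Integration.integral_diff)
         (auto intro!: Lw.integrable_const_bound[where B=K] psib simp: measurable_cong_sets[OF setsLw])
    also have "\<dots> = 0" by (simp add: h_def Lw.prob_space)
    finally show "(\<integral>u. g (u, v) \<partial>DU) = 0" by simp
  qed
  finally show ?thesis by simp
qed

lemma card_bad:
  fixes i N :: nat
  defines "B \<equiv> {(a,b,c,d). (a = i \<or> a \<in> {b,c,d}) \<and> (b = i \<or> b \<in> {a,c,d}) \<and> (c = i \<or> c \<in> {a,b,d}) \<and> (d = i \<or> d \<in> {a,b,c})}"
  shows "card (B \<inter> ({1..N}\<times>{1..N}\<times>{1..N}\<times>{1..N})) \<le> 7 * N^2"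
proof -
  let ?I = "{1..N}"
  have sub: "B \<inter> (?I\<times>?I\<times>?I\<times>?I) \<subseteq> ((\<lambda>(x,y). (x,x,y,y)) ` (?I\<times>?I) \<union> (\<lambda>(x,y). (x,y,x,y)) ` (?I\<times>?I) \<union> (\<lambda>(x,y). (x,y,y,x)) ` (?I\<times>?I))
     \<union> ((\<lambda>x. (i,x,x,x)) ` ?I \<union> (\<lambda>x. (x,i,x,x)) ` ?I \<union> (\<lambda>x. (x,x,i,x)) ` ?I \<union> (\<lambda>x. (x,x,x,i)) ` ?I)"
    (is "_ \<subseteq> ?U")
  proof
    fix p assume p: "p \<in> B \<inter> (?I\<times>?I\<times>?I\<times>?I)"
    obtain a b c d where pd: "p = (a,b,c,d)" by (cases p) auto
    from p have "(a=b\<and>c=d) \<or> (a=c\<and>b=d) \<or> (a=d\<and>b=c) \<or> (a=i\<and>b=c\<and>c=d) \<or> (b=i\<and>a=c\<and>c=d) \<or> (c=i\<and>a=b\<and>b=d) \<or> (d=i\<and>a=b\<and>b=c)"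
      unfolding pd B_def by auto
    then show "p \<in> ?U" using p unfolding pd by (auto simp: image_iff)
  qed
  have "card (B \<inter> (?I\<times>?I\<times>?I\<times>?I)) \<le> card ?U" by (rule card_mono[OF _ sub]) auto
  also have "\<dots> \<le> (card ((\<lambda>(x,y). (x,x,y,y)) ` (?I\<times>?I)) + card ((\<lambda>(x,y). (x,y,x,y)) ` (?I\<times>?I)) + card ((\<lambda>(x,y). (x,y,y,x)) ` (?I\<times>?I)))
     + (card ((\<lambda>x. (i,x,x,x)) ` ?I) + card ((\<lambda>x. (x,i,x,x)) ` ?I) + card ((\<lambda>x. (x,x,i,x)) ` ?I) + card ((\<lambda>x. (x,x,x,i)) ` ?I))"
    by (intro order.trans[OF card_Un_le] add_mono order.trans[OF card_Un_le] add_mono order.refl)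
  also have "\<dots> \<le> (N*N + N*N + N*N) + (N + N + N + N)"
    by (intro add_mono order.trans[OF card_image_le]) (auto simp: card_cartesian_product)
  also have "\<dots> \<le> 7 * N^2" proof -
    have "N \<le> N*N" by (cases N) auto
    then show ?thesis unfolding power2_eq_square by linarith
  qed
  finally show ?thesis .
qed

lemma sum_pow4_expand:
  "(\<Sum>k\<in>I. (Y k::real))^4 = (\<Sum>(a,b,c,d)\<in>I\<times>I\<times>I\<times>I. Y d * (Y c * (Y b * Y a)))"
proof -
  have "(\<Sum>k\<in>I. (Y k::real))^4 = (\<Sum>a\<in>I. \<Sum>b\<in>I. \<Sum>c\<in>I. \<Sum>d\<in>I. Y d * (Y c * (Y b * Y a)))"
    by (simp add: power4_eq_xxxx sum_distrib_left sum_distrib_right ac_simps)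
  also have "\<dots> = (\<Sum>(a,b,c,d)\<in>I\<times>I\<times>I\<times>I. Y d * (Y c * (Y b * Y a)))"
    by (simp add: sum.cartesian_product)
  finally show ?thesis .
qed

lemma abs3_bound:
  fixes u v w C :: real
  assumes "\<bar>u\<bar> \<le> C" "\<bar>v\<bar> \<le> C" "\<bar>w\<bar> \<le> C"
  shows "\<bar>u * v * w\<bar> \<le> C^3"
proof -
  have C0: "0 \<le> C" using assms(1) by linarith
  have "\<bar>u * v * w\<bar> = \<bar>u\<bar> * \<bar>v\<bar> * \<bar>w\<bar>" by (simp add: abs_mult)
  also have "\<dots> \<le> C * C * C"
    using assms C0 by (intro mult_mono) (auto intro: mult_mono)
  finally show ?thesis by (simp add: power3_eq_cube)
qed

lemma abs4_bound:
  fixes u v w x C :: real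
  assumes "\<bar>u\<bar> \<le> C" "\<bar>v\<bar> \<le> C" "\<bar>w\<bar> \<le> C" "\<bar>x\<bar> \<le> C"
  shows "\<bar>x * (w * (v * u))\<bar> \<le> C^4"
proof -
  have C0: "0 \<le> C" using assms(1) by linarith
  have "\<bar>x * (w * (v * u))\<bar> = \<bar>x\<bar> * (\<bar>w\<bar> * (\<bar>v\<bar> * \<bar>u\<bar>))" by (simp add: abs_mult)
  also have "\<dots> \<le> C * (C * (C * C))"
    using assms C0 by (intro mult_mono) (auto intro: mult_mono)
  finally show ?thesis by (simp add: power4_eq_xxxx)
qed

lemma (in prob_space) lln4:
  fixes X :: "nat \<Rightarrow> 'a \<Rightarrow> 'b::topological_space" and \<psi> :: "'b \<Rightarrow> 'b \<Rightarrow> real" and N i :: nat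
  assumes indep: "indep_vars (\<lambda>_. borel) X {1..}"
    and ident: "\<And>k. 1 \<le> k \<Longrightarrow> distr M borel (X k) = Lw"
    and psi[measurable]: "(\<lambda>(x,z). \<psi> x z) \<in> borel_measurable (borel \<Otimes>\<^sub>M borel)"
    and psib: "\<And>x z. \<bar>\<psi> x z\<bar> \<le> K"
    and i: "1 \<le> i" "i \<le> N"
  shows "integrable M (\<lambda>\<omega>. ((\<Sum>k=1..N. \<psi> (X i \<omega>) (X k \<omega>)) / real N - (\<integral>z. \<psi> (X i \<omega>) z \<partial>Lw))^4)
    \<and> (\<integral>\<omega>. ((\<Sum>k=1..N. \<psi> (X i \<omega>) (X k \<omega>)) / real N - (\<integral>z. \<psi> (X i \<omega>) z \<partial>Lw))^4 \<partial>M)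
          \<le> 112 * K^4 / (real N)^2"
proof -
  define I where "I = {1..N}"
  have finI: "finite I" and iI: "i \<in> I" and NI: "card I = N" and Npos: "0 < N"
    using i by (auto simp: I_def)
  have K0: "0 \<le> K" using psib[of undefined undefined] by linarith
  have Xm: "X k \<in> borel_measurable M" if "1 \<le> k" for k
    using indep that unfolding indep_vars_def by auto
  interpret Lw: prob_space Lw using ident[of 1, symmetric] Xm[of 1] by (simp add: prob_space_distr)
  have setsLw: "sets Lw = sets borel" using ident[of 1, symmetric] by simp
  have psiLw: "(\<lambda>(x,z). \<psi> x z) \<in> borel_measurable (borel \<Otimes>\<^sub>M Lw)"
    using psi by (simp cong: measurable_cong_sets[OF sets_pair_measure_cong[OF refl setsLw]])
  define h where "h = (\<lambda>x. \<integral>z. \<psi> x z \<partial>Lw)"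
  have h[measurable]: "h \<in> borel_measurable borel"
    unfolding h_def by (rule Lw.borel_measurable_lebesgue_integral) (use psiLw in simp)
  have psix[measurable]: "(\<lambda>z. \<psi> x z) \<in> borel_measurable borel" for x
  proof -
    have "(\<lambda>z. (\<lambda>(x,z). \<psi> x z) (x, z)) \<in> borel_measurable borel" by measurable
    then show ?thesis by simp
  qed
  have hb: "\<bar>h y\<bar> \<le> K" for y
  proof -
    have "\<bar>h y\<bar> \<le> (\<integral>z. \<bar>\<psi> y z\<bar> \<partial>Lw)" unfolding h_def by (rule integral_abs_bound)
    also have "\<dots> \<le> (\<integral>z. K \<partial>Lw)"
      by (intro integral_mono) (auto intro!: Lw.integrable_const_bound[where B=K] psib simp: measurable_cong_sets[OF setsLw])
    finally show ?thesis by (simp add: Lw.prob_space)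
  qed
  define Y where "Y = (\<lambda>k \<omega>. \<psi> (X i \<omega>) (X k \<omega>) - h (X i \<omega>))"
  have Ym: "Y k \<in> borel_measurable M" if "k \<in> I" for k
  proof -
    have [measurable]: "X i \<in> borel_measurable M" "X k \<in> borel_measurable M"
      using Xm i that by (auto simp: I_def)
    show ?thesis unfolding Y_def by measurable
  qed
  have Yb: "\<bar>Y k \<omega>\<bar> \<le> 2 * K" for k \<omega>
    using psib[of "X i \<omega>" "X k \<omega>"] hb[of "X i \<omega>"] unfolding Y_def by linarith
  define P where "P = (\<lambda>(a,b,c,d) \<omega>. Y d \<omega> * (Y c \<omega> * (Y b \<omega> * Y a \<omega>)))"
  have Pint: "integrable M (P p)" if "p \<in> I\<times>I\<times>I\<times>I" for p
  proof -
    obtain a b c d where p: "p = (a,b,c,d)" by (cases p) auto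
    have [measurable]: "Y a \<in> borel_measurable M" "Y b \<in> borel_measurable M"
        "Y c \<in> borel_measurable M" "Y d \<in> borel_measurable M"
      using that Ym unfolding p by auto
    show ?thesis
      by (rule integrable_const_bound[where B="(2*K)^4"])
         (use abs4_bound[OF Yb Yb Yb Yb] in \<open>auto simp: P_def p\<close>)
  qed
  have Pb: "\<bar>integral\<^sup>L M (P p)\<bar> \<le> (2*K)^4" if "p \<in> I\<times>I\<times>I\<times>I" for p
  proof -
    obtain a b c d where p: "p = (a,b,c,d)" by (cases p) auto
    have "\<bar>integral\<^sup>L M (P p)\<bar> \<le> (\<integral>\<omega>. \<bar>P p \<omega>\<bar> \<partial>M)" by (rule integral_abs_bound)
    also have "\<dots> \<le> (\<integral>\<omega>. (2*K)^4 \<partial>M)"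
      using Pint[OF that] abs4_bound[OF Yb Yb Yb Yb] by (intro integral_mono) (auto simp: P_def p)
    finally show ?thesis by (simp add: prob_space)
  qed
  have zeroA: "(\<integral>\<omega>. Y a \<omega> * (Y b \<omega> * Y c \<omega> * Y d \<omega>) \<partial>M) = 0"
    if abcd: "a \<in> I" "b \<in> I" "c \<in> I" "d \<in> I" and ai: "a \<noteq> i" and aS: "a \<notin> {b,c,d}" for a b c d
  proof -
    define S where "S = {i,b,c,d}"
    define F where "F = (\<lambda>v::nat\<Rightarrow>'b. (\<psi> (v i) (v b) - h (v i)) * (\<psi> (v i) (v c) - h (v i)) * (\<psi> (v i) (v d) - h (v i)))"
    have Fm: "F \<in> borel_measurable (PiM S (\<lambda>_. borel))"
      unfolding F_def S_def by measurable
    have Fb: "\<bar>F v\<bar> \<le> (2*K)^3" for v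
      unfolding F_def
      proof (intro abs3_bound)
      have "\<bar>\<psi> (v i) z - h (v i)\<bar> \<le> 2 * K" for z using psib[of "v i" z] hb[of "v i"] by linarith
      then show "\<bar>\<psi> (v i) (v b) - h (v i)\<bar> \<le> 2 * K" "\<bar>\<psi> (v i) (v c) - h (v i)\<bar> \<le> 2 * K"
        "\<bar>\<psi> (v i) (v d) - h (v i)\<bar> \<le> 2 * K" by auto
    qed
    have "(\<integral>\<omega>. (\<psi> (X i \<omega>) (X a \<omega>) - (\<integral>z. \<psi> (X i \<omega>) z \<partial>Lw)) * F (restrict (\<lambda>m. X m \<omega>) S) \<partial>M) = 0"
      by (rule zero_lemma[OF indep ident psi psib Fm Fb])
         (use abcd ai aS i in \<open>auto simp: I_def S_def\<close>)
    moreover have "(\<integral>\<omega>. Y a \<omega> * (Y b \<omega> * Y c \<omega> * Y d \<omega>) \<partial>M)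
       = (\<integral>\<omega>. (\<psi> (X i \<omega>) (X a \<omega>) - (\<integral>z. \<psi> (X i \<omega>) z \<partial>Lw)) * F (restrict (\<lambda>m. X m \<omega>) S) \<partial>M)"
      by (intro Bochner_Integration.integral_cong refl) (simp add: Y_def F_def S_def h_def)
    ultimately show ?thesis by simp
  qed
  define Bd where "Bd = {(a,b,c,d). (a = i \<or> a \<in> {b,c,d}) \<and> (b = i \<or> b \<in> {a,c,d}) \<and> (c = i \<or> c \<in> {a,b,d}) \<and> (d = i \<or> d \<in> {a,b,c})}"
  have zero: "integral\<^sup>L M (P p) = 0" if "p \<in> I\<times>I\<times>I\<times>I" "p \<notin> Bd" for p
  proof -
    obtain a b c d where p: "p = (a,b,c,d)" by (cases p) auto
    have abcd: "a \<in> I" "b \<in> I" "c \<in> I" "d \<in> I" using that(1) p by auto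
    have "(a \<noteq> i \<and> a \<notin> {b,c,d}) \<or> (b \<noteq> i \<and> b \<notin> {a,c,d}) \<or> (c \<noteq> i \<and> c \<notin> {a,b,d}) \<or> (d \<noteq> i \<and> d \<notin> {a,b,c})"
      using that(2) unfolding p Bd_def by auto
    moreover have "P p = (\<lambda>\<omega>. Y a \<omega> * (Y b \<omega> * Y c \<omega> * Y d \<omega>))"
      "P p = (\<lambda>\<omega>. Y b \<omega> * (Y a \<omega> * Y c \<omega> * Y d \<omega>))"
      "P p = (\<lambda>\<omega>. Y c \<omega> * (Y a \<omega> * Y b \<omega> * Y d \<omega>))"
      "P p = (\<lambda>\<omega>. Y d \<omega> * (Y a \<omega> * Y b \<omega> * Y c \<omega>))"
      by (auto simp: P_def p ac_simps)
    ultimately show ?thesis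
      using zeroA[of a b c d] zeroA[of b a c d] zeroA[of c a b d] zeroA[of d a b c] abcd
      by (auto simp: insert_commute)
  qed
  have eq1: "(\<Sum>k=1..N. \<psi> (X i \<omega>) (X k \<omega>)) / real N - (\<integral>z. \<psi> (X i \<omega>) z \<partial>Lw) = (\<Sum>k\<in>I. Y k \<omega>) / real N" for \<omega>
    using Npos unfolding I_def by (simp add: Y_def sum_subtractf h_def field_simps)
  have eqf: "(\<lambda>\<omega>. ((\<Sum>k=1..N. \<psi> (X i \<omega>) (X k \<omega>)) / real N - (\<integral>z. \<psi> (X i \<omega>) z \<partial>Lw))^4)
      = (\<lambda>\<omega>. (\<Sum>p\<in>I\<times>I\<times>I\<times>I. P p \<omega>) / (real N)^4)"
  proof (rule ext)
    fix \<omega>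
    have "((\<Sum>k=1..N. \<psi> (X i \<omega>) (X k \<omega>)) / real N - (\<integral>z. \<psi> (X i \<omega>) z \<partial>Lw))^4
        = ((\<Sum>k\<in>I. Y k \<omega>) / real N)^4" by (simp only: eq1)
    also have "\<dots> = (\<Sum>k\<in>I. Y k \<omega>)^4 / (real N)^4" by (simp add: power_divide)
    also have "(\<Sum>k\<in>I. Y k \<omega>)^4 = (\<Sum>p\<in>I\<times>I\<times>I\<times>I. P p \<omega>)"
      unfolding sum_pow4_expand by (intro sum.cong refl) (auto simp: P_def)
    finally show "((\<Sum>k=1..N. \<psi> (X i \<omega>) (X k \<omega>)) / real N - (\<integral>z. \<psi> (X i \<omega>) z \<partial>Lw))^4
        = (\<Sum>p\<in>I\<times>I\<times>I\<times>I. P p \<omega>) / (real N)^4" .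
  qed
  have intf: "integrable M (\<lambda>\<omega>. (\<Sum>p\<in>I\<times>I\<times>I\<times>I. P p \<omega>) / (real N)^4)"
    by (intro integrable_divide Bochner_Integration.integrable_sum Pint)
  have "(\<integral>\<omega>. ((\<Sum>k=1..N. \<psi> (X i \<omega>) (X k \<omega>)) / real N - (\<integral>z. \<psi> (X i \<omega>) z \<partial>Lw))^4 \<partial>M)
      = (\<integral>\<omega>. (\<Sum>p\<in>I\<times>I\<times>I\<times>I. P p \<omega>) / (real N)^4 \<partial>M)"
    by (simp only: eqf)
  also have "\<dots> = (\<Sum>p\<in>I\<times>I\<times>I\<times>I. integral\<^sup>L M (P p)) / (real N)^4"
    by (simp add: integral_sum Pint)
  also have "(\<Sum>p\<in>I\<times>I\<times>I\<times>I. integral\<^sup>L M (P p)) \<le> (\<Sum>p\<in>I\<times>I\<times>I\<times>I. (2*K)^4 * indicator Bd p)"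
  proof (rule sum_mono)
    fix p assume p: "p \<in> I\<times>I\<times>I\<times>I"
    show "integral\<^sup>L M (P p) \<le> (2*K)^4 * indicator Bd p"
      using zero[OF p] Pb[OF p] by (cases "p \<in> Bd") auto
  qed
  also have "\<dots> = (2*K)^4 * card ((I\<times>I\<times>I\<times>I) \<inter> Bd)"
  proof -
    have "(\<Sum>p\<in>I\<times>I\<times>I\<times>I. indicator Bd p :: real) = real (card ((I\<times>I\<times>I\<times>I) \<inter> Bd))"
      using finI by (simp add: indicator_def sum.If_cases)
    then show ?thesis by (simp add: sum_distrib_left[symmetric])
  qed
  also have "\<dots> \<le> (2*K)^4 * (7 * (real N)^2)"
  proof -
    have "card ((I\<times>I\<times>I\<times>I) \<inter> Bd) \<le> 7 * N^2"
      using card_bad[of i N] unfolding Bd_def I_def by (simp add: Int_commute)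
    then have "real (card ((I\<times>I\<times>I\<times>I) \<inter> Bd)) \<le> 7 * (real N)^2"
      by (metis of_nat_le_iff of_nat_mult of_nat_numeral of_nat_power)
    then show ?thesis using K0 by (intro mult_left_mono) auto
  qed
  finally have "(\<integral>\<omega>. ((\<Sum>k=1..N. \<psi> (X i \<omega>) (X k \<omega>)) / real N - (\<integral>z. \<psi> (X i \<omega>) z \<partial>Lw))^4 \<partial>M)
      \<le> (2*K)^4 * (7 * (real N)^2) / (real N)^4"
    using Npos by (simp add: divide_right_mono)
  also have "\<dots> = 112 * K^4 / (real N)^2"
    using Npos by (simp add: field_simps power_mult_distrib)
  finally show ?thesis using intf eqf by simp
qed

lemma pow4_sum:
  fixes x :: "'i \<Rightarrow> real"
  assumes "finite S"
  shows "(\<Sum>k\<in>S. x k)^4 \<le> real (card S)^3 * (\<Sum>k\<in>S. x k^4)"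
proof (cases "S = {}")
  case True then show ?thesis by simp
next
  case False
  define n where "n = real (card S)"
  have n0: "n > 0" using False assms by (simp add: n_def card_gt_0_iff)
  have "(\<Sum>k\<in>S. (1/n) *\<^sub>R x k)^4 \<le> (\<Sum>k\<in>S. (1/n) * (x k)^4)"
    by (rule convex_on_sum[OF assms False convex_power_even[of 4]])
       (use n0 in \<open>auto simp: n_def\<close>)
  then have "((\<Sum>k\<in>S. x k) / n)^4 \<le> (\<Sum>k\<in>S. x k^4) / n"
    by (simp add: sum_distrib_left[symmetric] sum_divide_distrib[symmetric] divide_inverse mult.commute)
  then have "(\<Sum>k\<in>S. x k)^4 / n^4 \<le> (\<Sum>k\<in>S. x k^4) / n" by (simp add: power_divide)
  then have "(\<Sum>k\<in>S. x k)^4 \<le> (\<Sum>k\<in>S. x k^4) / n * n^4" using n0 by (simp add: divide_le_eq)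
  also have "\<dots> = n^3 * (\<Sum>k\<in>S. x k^4)" using n0 by (simp add: field_simps eval_nat_numeral)
  finally show ?thesis by (simp add: n_def)
qed

lemma pow4_add:
  fixes a b :: real
  shows "(a + b)^4 \<le> 8 * (a^4 + b^4)"
  using pow4_sum[of "{0::nat,1}" "\<lambda>k. if k = 0 then a else b"] by simp

lemma integral_le_nonint:
  fixes f g :: "'a \<Rightarrow> real"
  assumes "integrable M g" "\<And>\<omega>. \<omega> \<in> space M \<Longrightarrow> 0 \<le> f \<omega>" "\<And>\<omega>. \<omega> \<in> space M \<Longrightarrow> f \<omega> \<le> g \<omega>"
  shows "integral\<^sup>L M f \<le> integral\<^sup>L M g"
proof (cases "integrable M f")
  case True then show ?thesis using assms by (intro integral_mono) auto
next
  case False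
  then have "integral\<^sup>L M f = 0" by (rule not_integrable_integral_eq)
  moreover have "\<And>\<omega>. \<omega> \<in> space M \<Longrightarrow> 0 \<le> g \<omega>" using assms(2,3) by (meson order.trans)
  then have "0 \<le> integral\<^sup>L M g" by (rule Bochner_Integration.integral_nonneg)
  ultimately show ?thesis by simp
qed

lemma empirical_prob_on:
  fixes Z :: "nat \<Rightarrow> 'a::topological_space"
  assumes "1 \<le> N" "\<And>k. 1 \<le> k \<Longrightarrow> k \<le> N \<Longrightarrow> Z k \<in> S" "closed S"
  shows "empirical N Z \<in> prob_on S"
proof -
  have ne: "{1..N} \<noteq> {}" using assms by auto
  have "emeasure (measure_pmf (pmf_of_set {1..N})) (Z -` S) = 1"
    by (rule measure_pmf.emeasure_eq_1_AE) (use ne assms in \<open>auto simp: AE_measure_pmf_iff\<close>)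
  then show ?thesis
    unfolding prob_on_def empirical_def using assms
    by (auto simp: measure_pmf.prob_space_distr emeasure_distr)
qed

lemma empirical_integral:
  fixes Z :: "nat \<Rightarrow> 'a::topological_space" and f :: "'a \<Rightarrow> real"
  assumes "1 \<le> N" "f \<in> borel_measurable borel"
  shows "(\<integral>z. f z \<partial>empirical N Z) = (\<Sum>k=1..N. f (Z k)) / real N"
proof -
  have ne: "{1..N} \<noteq> {}" using assms by auto
  have "(\<integral>z. f z \<partial>empirical N Z) = (\<integral>k. f (Z k) \<partial>measure_pmf (pmf_of_set {1..N}))"
    unfolding empirical_def by (rule integral_distr) (use assms in auto)
  also have "\<dots> = (\<Sum>k=1..N. f (Z k)) / real N"
    using ne by (subst integral_pmf_of_set) auto
  finally show ?thesis .
qed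

lemma distr_prob_on:
  assumes "prob_space M" "Y \<in> borel_measurable M" "\<And>\<omega>. \<omega> \<in> space M \<Longrightarrow> Y \<omega> \<in> S" "closed S"
  shows "distr M borel Y \<in> prob_on S"
proof -
  interpret prob_space M by fact
  have "Y -` S \<inter> space M = space M" using assms by auto
  then show ?thesis unfolding prob_on_def using assms
    by (auto simp: prob_space_distr emeasure_distr emeasure_space_1)
qed

lemma int_cmp:
  fixes f g :: "'a::topological_space \<Rightarrow> real"
  assumes "\<mu>1 \<in> prob_on S" "\<mu>2 \<in> prob_on S" "closed S"
    and g: "g \<in> borel_measurable borel" and fg: "\<And>z. z \<in> S \<Longrightarrow> f z = g z"
  shows "\<bar>(\<integral>z. f z \<partial>\<mu>1) - (\<integral>z. f z \<partial>\<mu>2)\<bar> \<le> \<bar>(\<integral>z. g z \<partial>\<mu>1) - (\<integral>z. g z \<partial>\<mu>2)\<bar>"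
proof (cases "f \<in> borel_measurable borel")
  case True
  have eq: "(\<integral>z. f z \<partial>\<mu>) = (\<integral>z. g z \<partial>\<mu>)" if "\<mu> \<in> prob_on S" for \<mu>
  proof -
    interpret prob_space \<mu> using that by (simp add: prob_on_def)
    have sets: "sets \<mu> = sets borel" and em: "emeasure \<mu> S = 1" using that by (auto simp: prob_on_def)
    have "prob S = 1" using em by (simp add: measure_def)
    then have "AE z in \<mu>. z \<in> S" by (rule AE_prob_1)
    moreover have "f \<in> borel_measurable \<mu>" "g \<in> borel_measurable \<mu>"
      using True g by (simp_all add: measurable_cong_sets[OF sets refl])
    ultimately show ?thesis
      by (intro integral_cong_AE) (auto simp: fg)
  qed
  show ?thesis using eq[OF assms(1)] eq[OF assms(2)] by simp
next
  case False
  have "\<not> integrable \<mu> f" if "\<mu> \<in> prob_on S" for \<mu>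
  proof
    assume "integrable \<mu> f"
    then have "f \<in> borel_measurable \<mu>" by auto
    moreover have "sets \<mu> = sets borel" using that by (auto simp: prob_on_def)
    ultimately show False using False measurable_cong_sets[of \<mu> borel borel borel] by simp
  qed
  then have "integral\<^sup>L \<mu>1 f = 0" "integral\<^sup>L \<mu>2 f = 0"
    using assms(1,2) by (simp_all add: not_integrable_integral_eq)
  then show ?thesis by simp
qed

theorem lemma4p3:
  fixes T L :: real and G :: "(real^'d) set" and J :: nat
    and b :: "real \<Rightarrow> real^'d \<Rightarrow> (real^'d) measure \<Rightarrow> real^'d"
    and \<sigma> :: "real \<Rightarrow> real^'d \<Rightarrow> (real^'d) measure \<Rightarrow> real^'d^'d"
    and \<phi> :: "nat \<Rightarrow> real \<Rightarrow> real^'d \<Rightarrow> real^'d \<Rightarrow> real"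
    and M :: "'w measure"
    and X :: "nat \<Rightarrow> real \<Rightarrow> 'w \<Rightarrow> real^'d"
    and XN :: "nat \<Rightarrow> nat \<Rightarrow> real \<Rightarrow> 'w \<Rightarrow> real^'d"
  assumes T_pos: "T > 0"
    and G_open: "open G" and G_conn: "connected G" and G_ne: "G \<noteq> {}" and G_bdd: "bounded G"
    and L_pos: "L > 0"
    and b_cont: "\<And>x \<mu>. x \<in> closure G \<Longrightarrow> \<mu> \<in> prob_on (closure G) \<Longrightarrow>
                   continuous_on {0..T} (\<lambda>t. b t x \<mu>)"
    and \<sigma>_cont: "\<And>x \<mu>. x \<in> closure G \<Longrightarrow> \<mu> \<in> prob_on (closure G) \<Longrightarrow>
                   continuous_on {0..T} (\<lambda>t. \<sigma> t x \<mu>)"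
    and \<phi>_cont: "\<And>j. j \<in> {1..J} \<Longrightarrow>
                   continuous_on ({0..T} \<times> closure G \<times> closure G) (\<lambda>(t, x, y). \<phi> j t x y)"
    and \<phi>_lip: "\<exists>C. \<forall>j\<in>{1..J}. \<forall>t\<in>{0..T}. \<forall>x\<in>closure G. \<forall>y\<in>closure G. \<forall>z\<in>closure G.
                   \<bar>\<phi> j t x y - \<phi> j t x z\<bar> \<le> C * dist y z"
    and lip: "\<And>t x y \<mu>1 \<mu>2. t \<in> {0..T} \<Longrightarrow> x \<in> closure G \<Longrightarrow> y \<in> closure G \<Longrightarrow>
                \<mu>1 \<in> prob_on (closure G) \<Longrightarrow> \<mu>2 \<in> prob_on (closure G) \<Longrightarrow>
                norm (b t x \<mu>1 - b t y \<mu>2) + norm (\<sigma> t x \<mu>1 - \<sigma> t y \<mu>2)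
                \<le> L * (dist x y + (\<Sum>j=1..J. \<bar>(\<integral>z. \<phi> j t x z \<partial>\<mu>1) - (\<integral>z. \<phi> j t x z \<partial>\<mu>2)\<bar>))"
    and M_prob: "prob_space M"
    and X_rv: "\<And>i t. i \<ge> 1 \<Longrightarrow> t \<in> {0..T} \<Longrightarrow> X i t \<in> borel_measurable M"
    and X_in: "\<And>i t \<omega>. i \<ge> 1 \<Longrightarrow> t \<in> {0..T} \<Longrightarrow> \<omega> \<in> space M \<Longrightarrow> X i t \<omega> \<in> closure G"
    and X_indep: "\<And>t. t \<in> {0..T} \<Longrightarrow> prob_space.indep_vars M (\<lambda>_. borel) (\<lambda>i. X i t) {1..}"
    and X_ident: "\<And>i t. i \<ge> 1 \<Longrightarrow> t \<in> {0..T} \<Longrightarrow> distr M borel (X i t) = distr M borel (X 1 t)"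
    and XN_rv: "\<And>N i t. 1 \<le> i \<Longrightarrow> i \<le> N \<Longrightarrow> t \<in> {0..T} \<Longrightarrow> XN N i t \<in> borel_measurable M"
    and XN_in: "\<And>N i t \<omega>. 1 \<le> i \<Longrightarrow> i \<le> N \<Longrightarrow> t \<in> {0..T} \<Longrightarrow> \<omega> \<in> space M \<Longrightarrow>
                  XN N i t \<omega> \<in> closure G"
  shows "\<exists>C>0. \<forall>N\<ge>1. \<forall>t\<in>{0..T}. \<forall>i\<in>{1..N}.
     (\<integral>\<omega>. norm (b t (XN N i t \<omega>) (empirical N (\<lambda>j. XN N j t \<omega>))
                 - b t (X i t \<omega>) (empirical N (\<lambda>j. X j t \<omega>))) ^ 4 \<partial>M)
   + (\<integral>\<omega>. norm (\<sigma> t (XN N i t \<omega>) (empirical N (\<lambda>j. XN N j t \<omega>))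
                 - \<sigma> t (X i t \<omega>) (empirical N (\<lambda>j. X j t \<omega>))) ^ 4 \<partial>M)
   \<le> C * ((\<integral>\<omega>. norm (XN N i t \<omega> - X i t \<omega>) ^ 4 \<partial>M)
          + (1 / real N) * (\<Sum>j=1..N. \<integral>\<omega>. norm (XN N j t \<omega> - X j t \<omega>) ^ 4 \<partial>M))
   \<and>
     (\<integral>\<omega>. norm (b t (X i t \<omega>) (empirical N (\<lambda>j. X j t \<omega>))
                 - b t (X i t \<omega>) (distr M borel (X 1 t))) ^ 4 \<partial>M)
   + (\<integral>\<omega>. norm (\<sigma> t (X i t \<omega>) (empirical N (\<lambda>j. X j t \<omega>))
                 - \<sigma> t (X i t \<omega>) (distr M borel (X 1 t))) ^ 4 \<partial>M)
   \<le> C / (real N) ^ 2"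
proof -
  interpret prob_space M by (rule M_prob)
  have clG: "closed (closure G)" by simp
  have cpt: "compact (closure G)" using G_bdd by simp
  obtain R where R: "\<And>x. x \<in> closure G \<Longrightarrow> norm x \<le> R"
    using compact_imp_bounded[OF cpt] by (auto simp: bounded_iff)
  obtain C0 where C0: "\<forall>j\<in>{1..J}. \<forall>t\<in>{0..T}. \<forall>x\<in>closure G. \<forall>y\<in>closure G. \<forall>z\<in>closure G.
                   \<bar>\<phi> j t x y - \<phi> j t x z\<bar> \<le> C0 * dist y z" using \<phi>_lip by blast
  define Cp where "Cp = max C0 0"
  have Cp0: "0 \<le> Cp" by (simp add: Cp_def)
  have philip: "\<bar>\<phi> j t x y - \<phi> j t x z\<bar> \<le> Cp * dist y z"
    if "j \<in> {1..J}" "t \<in> {0..T}" "x \<in> closure G" "y \<in> closure G" "z \<in> closure G" for j t x y z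
  proof -
    have "\<bar>\<phi> j t x y - \<phi> j t x z\<bar> \<le> C0 * dist y z" using C0 that by blast
    also have "\<dots> \<le> Cp * dist y z" by (intro mult_right_mono) (auto simp: Cp_def)
    finally show ?thesis .
  qed
  have "\<forall>j\<in>{1..J}. \<exists>B. \<forall>t\<in>{0..T}. \<forall>x\<in>closure G. \<forall>y\<in>closure G. \<bar>\<phi> j t x y\<bar> \<le> B"
  proof
    fix j assume j: "j \<in> {1..J}"
    have "compact ((\<lambda>(t,x,y). \<phi> j t x y) ` ({0..T} \<times> closure G \<times> closure G))"
      by (rule compact_continuous_image[OF \<phi>_cont[OF j]]) (intro compact_Times compact_Icc cpt)
    then obtain B where B: "\<forall>v\<in>(\<lambda>(t,x,y). \<phi> j t x y) ` ({0..T} \<times> closure G \<times> closure G). norm v \<le> B"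
      by (auto dest!: compact_imp_bounded simp: bounded_iff)
    show "\<exists>B. \<forall>t\<in>{0..T}. \<forall>x\<in>closure G. \<forall>y\<in>closure G. \<bar>\<phi> j t x y\<bar> \<le> B"
    proof (intro exI ballI)
      fix t x y assume "t \<in> {0..T}" "x \<in> closure G" "y \<in> closure G"
      then show "\<bar>\<phi> j t x y\<bar> \<le> B" using B by force
    qed
  qed
  then obtain Bf where Bf: "\<And>j t x y. j \<in> {1..J} \<Longrightarrow> t \<in> {0..T} \<Longrightarrow> x \<in> closure G \<Longrightarrow> y \<in> closure G \<Longrightarrow> \<bar>\<phi> j t x y\<bar> \<le> Bf j"
    by metis
  define K where "K = (\<Sum>j=1..J. \<bar>Bf j\<bar>)"
  have K0: "0 \<le> K" by (simp add: K_def sum_nonneg)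
  have phib: "\<bar>\<phi> j t x y\<bar> \<le> K" if "j \<in> {1..J}" "t \<in> {0..T}" "x \<in> closure G" "y \<in> closure G" for j t x y
  proof -
    have "\<bar>\<phi> j t x y\<bar> \<le> \<bar>Bf j\<bar>" using Bf[OF that] by linarith
    also have "\<dots> \<le> K" unfolding K_def by (rule member_le_sum) (use that in auto)
    finally show ?thesis .
  qed
  define \<psi> where "\<psi> j t x z = indicator (closure G \<times> closure G) (x, z) * \<phi> j t x z" for j t x z
  have psib: "\<bar>\<psi> j t x z\<bar> \<le> K" if "j \<in> {1..J}" "t \<in> {0..T}" for j t x z
    using phib[OF that, of x z] K0 by (auto simp: \<psi>_def indicator_def)
  have psi_eq: "\<psi> j t x z = \<phi> j t x z" if "x \<in> closure G" "z \<in> closure G" for j t x z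
    using that by (simp add: \<psi>_def)
  have psim: "(\<lambda>(x, z). \<psi> j t x z) \<in> borel_measurable (borel \<Otimes>\<^sub>M borel)"
    if j: "j \<in> {1..J}" and t: "t \<in> {0..T}" for j t
  proof -
    have "continuous_on (closure G \<times> closure G) (\<lambda>p. (\<lambda>(t,x,y). \<phi> j t x y) (t, fst p, snd p))"
      by (rule continuous_on_compose2[OF \<phi>_cont[OF j]]) (use t in \<open>auto intro!: continuous_intros\<close>)
    then have "(\<lambda>p. indicator (closure G \<times> closure G) p *\<^sub>R (\<lambda>(t,x,y). \<phi> j t x y) (t, fst p, snd p)) \<in> borel_measurable borel"
      by (intro borel_measurable_continuous_on_indicator) (auto intro: borel_closed closed_Times)
    moreover have "(\<lambda>(x, z). \<psi> j t x z) = (\<lambda>p. indicator (closure G \<times> closure G) p *\<^sub>R (\<lambda>(t,x,y). \<phi> j t x y) (t, fst p, snd p))"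
      by (auto simp: \<psi>_def fun_eq_iff)
    ultimately have "(\<lambda>(x, z). \<psi> j t x z) \<in> borel_measurable borel"
      by simp
    then show ?thesis by (simp add: borel_prod)
  qed
  have psix: "(\<lambda>z. \<psi> j t x z) \<in> borel_measurable borel" if "j \<in> {1..J}" "t \<in> {0..T}" for j t x
  proof -
    note [measurable] = psim[OF that]
    have "(\<lambda>z. (\<lambda>(x,z). \<psi> j t x z) (x, z)) \<in> borel_measurable borel" by measurable
    then show ?thesis by simp
  qed
  have cmpj: "\<bar>(\<integral>z. \<phi> j t x z \<partial>\<mu>1) - (\<integral>z. \<phi> j t x z \<partial>\<mu>2)\<bar> \<le> \<bar>(\<integral>z. \<psi> j t x z \<partial>\<mu>1) - (\<integral>z. \<psi> j t x z \<partial>\<mu>2)\<bar>"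
    if "j \<in> {1..J}" "t \<in> {0..T}" "x \<in> closure G" "\<mu>1 \<in> prob_on (closure G)" "\<mu>2 \<in> prob_on (closure G)" for j t x \<mu>1 \<mu>2
    by (rule int_cmp[OF that(4,5) clG psix[OF that(1,2)]]) (use that(3) in \<open>simp add: psi_eq\<close>)
  define C1 where "C1 = 16 * L^4 * (1 + (real J * Cp)^4)"
  define C2 where "C2 = 224 * L^4 * real J^4 * K^4"
  have part1: "(\<integral>\<omega>. norm (b t (XN N i t \<omega>) (empirical N (\<lambda>j. XN N j t \<omega>))
                 - b t (X i t \<omega>) (empirical N (\<lambda>j. X j t \<omega>))) ^ 4 \<partial>M)
   + (\<integral>\<omega>. norm (\<sigma> t (XN N i t \<omega>) (empirical N (\<lambda>j. XN N j t \<omega>))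
                 - \<sigma> t (X i t \<omega>) (empirical N (\<lambda>j. X j t \<omega>))) ^ 4 \<partial>M)
   \<le> C1 * ((\<integral>\<omega>. norm (XN N i t \<omega> - X i t \<omega>) ^ 4 \<partial>M)
          + (1 / real N) * (\<Sum>j=1..N. \<integral>\<omega>. norm (XN N j t \<omega> - X j t \<omega>) ^ 4 \<partial>M))"
    if N1: "1 \<le> N" and t: "t \<in> {0..T}" and i: "i \<in> {1..N}" for N t i
  proof -
    define dd where "dd k \<omega> = norm (XN N k t \<omega> - X k t \<omega>)" for k \<omega>
    define c where "c = (real J * Cp)^4"
    have c0: "0 \<le> c" unfolding c_def using Cp0 by simp
    define g where "g \<omega> = 8 * L^4 * (dd i \<omega> ^ 4 + c * ((\<Sum>k=1..N. dd k \<omega> ^ 4) / real N))" for \<omega>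
    have Npos: "0 < real N" using N1 by simp
    have ddint: "integrable M (\<lambda>\<omega>. dd k \<omega> ^ 4)" if k: "k \<in> {1..N}" for k
    proof -
      have [measurable]: "XN N k t \<in> borel_measurable M" "X k t \<in> borel_measurable M"
        using XN_rv X_rv k t by auto
      show ?thesis
      proof (rule integrable_const_bound[where B="(2*R)^4"])
        show "AE \<omega> in M. norm (dd k \<omega> ^ 4) \<le> (2*R)^4"
        proof (rule AE_I2)
          fix \<omega> assume \<omega>: "\<omega> \<in> space M"
          have "dd k \<omega> \<le> norm (XN N k t \<omega>) + norm (X k t \<omega>)" unfolding dd_def by (rule norm_triangle_ineq4)
          also have "\<dots> \<le> 2 * R" using R[OF XN_in[of k N t \<omega>]] R[OF X_in[of k t \<omega>]] k t \<omega> by auto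
          finally have "dd k \<omega> ^ 4 \<le> (2*R)^4" by (intro power_mono) (auto simp: dd_def)
          then show "norm (dd k \<omega> ^ 4) \<le> (2*R)^4" by (simp add: dd_def)
        qed
      qed (simp add: dd_def)
    qed
    have sumint: "integrable M (\<lambda>\<omega>. \<Sum>k=1..N. dd k \<omega> ^ 4)"
      by (intro Bochner_Integration.integrable_sum ddint)
    have gint: "integrable M g"
      unfolding g_def using ddint[OF i] sumint
      by (intro integrable_mult_right Bochner_Integration.integrable_add integrable_divide) auto
    have Eg: "integral\<^sup>L M g = 8 * L^4 * ((\<integral>\<omega>. dd i \<omega> ^ 4 \<partial>M) + c * ((\<Sum>k=1..N. (\<integral>\<omega>. dd k \<omega> ^ 4 \<partial>M)) / real N))"
    proof -
      have "integral\<^sup>L M g = 8 * L^4 * (\<integral>\<omega>. dd i \<omega> ^ 4 + c * ((\<Sum>k=1..N. dd k \<omega> ^ 4) / real N) \<partial>M)"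
        unfolding g_def by simp
      also have "(\<integral>\<omega>. dd i \<omega> ^ 4 + c * ((\<Sum>k=1..N. dd k \<omega> ^ 4) / real N) \<partial>M)
          = (\<integral>\<omega>. dd i \<omega> ^ 4 \<partial>M) + (\<integral>\<omega>. c * ((\<Sum>k=1..N. dd k \<omega> ^ 4) / real N) \<partial>M)"
        using ddint[OF i] sumint by (intro Bochner_Integration.integral_add) auto
      also have "(\<integral>\<omega>. c * ((\<Sum>k=1..N. dd k \<omega> ^ 4) / real N) \<partial>M) = c * ((\<integral>\<omega>. (\<Sum>k=1..N. dd k \<omega> ^ 4) \<partial>M) / real N)"
        by simp
      also have "(\<integral>\<omega>. (\<Sum>k=1..N. dd k \<omega> ^ 4) \<partial>M) = (\<Sum>k=1..N. (\<integral>\<omega>. dd k \<omega> ^ 4 \<partial>M))"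
        by (intro Bochner_Integration.integral_sum ddint)
      finally show ?thesis .
    qed
    have pw: "norm (b t (XN N i t \<omega>) (empirical N (\<lambda>j. XN N j t \<omega>)) - b t (X i t \<omega>) (empirical N (\<lambda>j. X j t \<omega>))) ^ 4 \<le> g \<omega>
       \<and> norm (\<sigma> t (XN N i t \<omega>) (empirical N (\<lambda>j. XN N j t \<omega>)) - \<sigma> t (X i t \<omega>) (empirical N (\<lambda>j. X j t \<omega>))) ^ 4 \<le> g \<omega>"
      if \<omega>: "\<omega> \<in> space M" for \<omega>
    proof -
      define x where "x = XN N i t \<omega>"
      define y where "y = X i t \<omega>"
      define \<mu>1 where "\<mu>1 = empirical N (\<lambda>j. XN N j t \<omega>)"
      define \<mu>2 where "\<mu>2 = empirical N (\<lambda>j. X j t \<omega>)"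
      have xin: "x \<in> closure G" unfolding x_def using XN_in i t \<omega> by auto
      have yin: "y \<in> closure G" unfolding y_def using X_in i t \<omega> by auto
      have XNin: "XN N k t \<omega> \<in> closure G" if "k \<in> {1..N}" for k using XN_in that t \<omega> by auto
      have Xin: "X k t \<omega> \<in> closure G" if "k \<in> {1..N}" for k using X_in that t \<omega> by auto
      have mu1: "\<mu>1 \<in> prob_on (closure G)" unfolding \<mu>1_def
        by (rule empirical_prob_on[OF N1 _ clG]) (use XNin in auto)
      have mu2: "\<mu>2 \<in> prob_on (closure G)" unfolding \<mu>2_def
        by (rule empirical_prob_on[OF N1 _ clG]) (use Xin in auto)
      define m where "m = (\<Sum>k=1..N. dd k \<omega>) / real N"
      have m0: "0 \<le> m" unfolding m_def dd_def by (simp add: sum_nonneg)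
      have jb: "\<bar>(\<integral>z. \<phi> j t x z \<partial>\<mu>1) - (\<integral>z. \<phi> j t x z \<partial>\<mu>2)\<bar> \<le> Cp * m" if j: "j \<in> {1..J}" for j
      proof -
        have "\<bar>(\<integral>z. \<phi> j t x z \<partial>\<mu>1) - (\<integral>z. \<phi> j t x z \<partial>\<mu>2)\<bar> \<le> \<bar>(\<integral>z. \<psi> j t x z \<partial>\<mu>1) - (\<integral>z. \<psi> j t x z \<partial>\<mu>2)\<bar>"
          by (rule cmpj[OF j t xin mu1 mu2])
        also have "(\<integral>z. \<psi> j t x z \<partial>\<mu>1) - (\<integral>z. \<psi> j t x z \<partial>\<mu>2) = (\<Sum>k=1..N. \<psi> j t x (XN N k t \<omega>) - \<psi> j t x (X k t \<omega>)) / real N"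
          unfolding \<mu>1_def \<mu>2_def
          by (simp add: empirical_integral[OF N1 psix[OF j t]] sum_subtractf diff_divide_distrib)
        also have "\<bar>\<dots>\<bar> \<le> (\<Sum>k=1..N. \<bar>\<psi> j t x (XN N k t \<omega>) - \<psi> j t x (X k t \<omega>)\<bar>) / real N"
          using Npos by (simp add: divide_right_mono sum_abs)
        also have "\<dots> \<le> (\<Sum>k=1..N. Cp * dd k \<omega>) / real N"
        proof (intro divide_right_mono sum_mono)
          fix k assume k: "k \<in> {1..N}"
          have "\<bar>\<psi> j t x (XN N k t \<omega>) - \<psi> j t x (X k t \<omega>)\<bar> = \<bar>\<phi> j t x (XN N k t \<omega>) - \<phi> j t x (X k t \<omega>)\<bar>"
            using xin XNin[OF k] Xin[OF k] by (simp add: psi_eq)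
          also have "\<dots> \<le> Cp * dist (XN N k t \<omega>) (X k t \<omega>)"
            by (rule philip[OF j t xin XNin[OF k] Xin[OF k]])
          finally show "\<bar>\<psi> j t x (XN N k t \<omega>) - \<psi> j t x (X k t \<omega>)\<bar> \<le> Cp * dd k \<omega>"
            by (simp add: dd_def dist_norm)
        qed simp
        also have "\<dots> = Cp * m" by (simp add: m_def sum_distrib_left[symmetric])
        finally show ?thesis .
      qed
      have "norm (b t x \<mu>1 - b t y \<mu>2) + norm (\<sigma> t x \<mu>1 - \<sigma> t y \<mu>2)
          \<le> L * (dist x y + (\<Sum>j=1..J. \<bar>(\<integral>z. \<phi> j t x z \<partial>\<mu>1) - (\<integral>z. \<phi> j t x z \<partial>\<mu>2)\<bar>))"
        by (rule lip[OF t xin yin mu1 mu2])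
      also have "\<dots> \<le> L * (dd i \<omega> + real J * Cp * m)"
      proof (intro mult_left_mono add_mono)
        show "dist x y \<le> dd i \<omega>" by (simp add: x_def y_def dd_def dist_norm)
        have "(\<Sum>j=1..J. \<bar>(\<integral>z. \<phi> j t x z \<partial>\<mu>1) - (\<integral>z. \<phi> j t x z \<partial>\<mu>2)\<bar>) \<le> (\<Sum>j=1..J. Cp * m)"
          by (intro sum_mono jb)
        then show "(\<Sum>j=1..J. \<bar>(\<integral>z. \<phi> j t x z \<partial>\<mu>1) - (\<integral>z. \<phi> j t x z \<partial>\<mu>2)\<bar>) \<le> real J * Cp * m"
          by simp
      qed (use L_pos in simp)
      finally have S: "norm (b t x \<mu>1 - b t y \<mu>2) + norm (\<sigma> t x \<mu>1 - \<sigma> t y \<mu>2) \<le> L * (dd i \<omega> + real J * Cp * m)" .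
      define Q where "Q = L * (dd i \<omega> + real J * Cp * m)"
      have m4: "m ^ 4 \<le> (\<Sum>k=1..N. dd k \<omega> ^ 4) / real N"
      proof -
        have "(\<Sum>k=1..N. dd k \<omega>)^4 \<le> real N ^ 3 * (\<Sum>k=1..N. dd k \<omega> ^ 4)"
          using pow4_sum[of "{1..N}" "\<lambda>k. dd k \<omega>"] by simp
        then have "(\<Sum>k=1..N. dd k \<omega>)^4 / real N ^ 4 \<le> real N ^ 3 * (\<Sum>k=1..N. dd k \<omega> ^ 4) / real N ^ 4"
          using Npos by (intro divide_right_mono) auto
        also have "\<dots> = (\<Sum>k=1..N. dd k \<omega> ^ 4) / real N"
          using Npos by (simp add: field_simps eval_nat_numeral)
        finally show ?thesis by (simp add: m_def power_divide)
      qed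
      have Q4: "Q ^ 4 \<le> g \<omega>"
      proof -
        have "Q ^ 4 = L^4 * (dd i \<omega> + real J * Cp * m) ^ 4" by (simp add: Q_def power_mult_distrib)
        also have "\<dots> \<le> L^4 * (8 * (dd i \<omega> ^ 4 + (real J * Cp * m) ^ 4))"
          by (intro mult_left_mono pow4_add) simp
        also have "(real J * Cp * m) ^ 4 = c * m ^ 4" by (simp add: c_def power_mult_distrib)
        also have "L^4 * (8 * (dd i \<omega> ^ 4 + c * m ^ 4)) \<le> L^4 * (8 * (dd i \<omega> ^ 4 + c * ((\<Sum>k=1..N. dd k \<omega> ^ 4) / real N)))"
          using m4 c0 by (intro mult_left_mono add_left_mono) auto
        also have "\<dots> = g \<omega>" by (simp add: g_def)
        finally show ?thesis .
      qed
      have "norm (b t x \<mu>1 - b t y \<mu>2) \<le> Q"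
        using S norm_ge_zero[of "\<sigma> t x \<mu>1 - \<sigma> t y \<mu>2"] unfolding Q_def by linarith
      then have "norm (b t x \<mu>1 - b t y \<mu>2) ^ 4 \<le> Q ^ 4" by (intro power_mono) auto
      have "norm (\<sigma> t x \<mu>1 - \<sigma> t y \<mu>2) \<le> Q"
        using S norm_ge_zero[of "b t x \<mu>1 - b t y \<mu>2"] unfolding Q_def by linarith
      then have "norm (\<sigma> t x \<mu>1 - \<sigma> t y \<mu>2) ^ 4 \<le> Q ^ 4" by (intro power_mono) auto
      moreover note \<open>norm (b t x \<mu>1 - b t y \<mu>2) ^ 4 \<le> Q ^ 4\<close>
      ultimately show ?thesis using Q4 by (simp add: x_def y_def \<mu>1_def \<mu>2_def)
    qed
    have "(\<integral>\<omega>. norm (b t (XN N i t \<omega>) (empirical N (\<lambda>j. XN N j t \<omega>))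
                 - b t (X i t \<omega>) (empirical N (\<lambda>j. X j t \<omega>))) ^ 4 \<partial>M) \<le> integral\<^sup>L M g"
      by (rule integral_le_nonint[OF gint]) (use pw in auto)
    moreover have "(\<integral>\<omega>. norm (\<sigma> t (XN N i t \<omega>) (empirical N (\<lambda>j. XN N j t \<omega>))
                 - \<sigma> t (X i t \<omega>) (empirical N (\<lambda>j. X j t \<omega>))) ^ 4 \<partial>M) \<le> integral\<^sup>L M g"
      by (rule integral_le_nonint[OF gint]) (use pw in auto)
    moreover have "2 * integral\<^sup>L M g \<le> C1 * ((\<integral>\<omega>. norm (XN N i t \<omega> - X i t \<omega>) ^ 4 \<partial>M)
          + (1 / real N) * (\<Sum>j=1..N. \<integral>\<omega>. norm (XN N j t \<omega> - X j t \<omega>) ^ 4 \<partial>M))"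
    proof -
      define a where "a = (\<integral>\<omega>. dd i \<omega> ^ 4 \<partial>M)"
      define s where "s = (\<Sum>k=1..N. (\<integral>\<omega>. dd k \<omega> ^ 4 \<partial>M)) / real N"
      have a0: "0 \<le> a" unfolding a_def dd_def by (intro Bochner_Integration.integral_nonneg) auto
      have s0: "0 \<le> s" unfolding s_def dd_def by (intro divide_nonneg_nonneg sum_nonneg Bochner_Integration.integral_nonneg) auto
      have "2 * integral\<^sup>L M g = 16 * L^4 * (a + c * s)" by (simp add: Eg a_def s_def)
      also have "\<dots> \<le> 16 * L^4 * ((1 + c) * (a + s))"
        using a0 s0 c0 by (intro mult_left_mono) (auto simp: algebra_simps)
      also have "\<dots> = C1 * (a + s)" by (simp add: C1_def c_def)
      finally show ?thesis by (simp add: a_def s_def dd_def)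
    qed
    ultimately show ?thesis by linarith
  qed
  have part2: "(\<integral>\<omega>. norm (b t (X i t \<omega>) (empirical N (\<lambda>j. X j t \<omega>))
                 - b t (X i t \<omega>) (distr M borel (X 1 t))) ^ 4 \<partial>M)
   + (\<integral>\<omega>. norm (\<sigma> t (X i t \<omega>) (empirical N (\<lambda>j. X j t \<omega>))
                 - \<sigma> t (X i t \<omega>) (distr M borel (X 1 t))) ^ 4 \<partial>M)
   \<le> C2 / (real N) ^ 2"
    if N1: "1 \<le> N" and t: "t \<in> {0..T}" and i: "i \<in> {1..N}" for N t i
  proof -
    define Lw where "Lw = distr M borel (X 1 t)"
    have Npos: "0 < real N" using N1 by simp
    have Xrv1: "X 1 t \<in> borel_measurable M" using X_rv t by simp
    have Xin1: "\<And>\<omega>. \<omega> \<in> space M \<Longrightarrow> X 1 t \<omega> \<in> closure G" using X_in t by simp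
    have Lw_on: "Lw \<in> prob_on (closure G)" unfolding Lw_def
      by (rule distr_prob_on[OF M_prob Xrv1 Xin1 clG])
    define A where "A j \<omega> = (\<Sum>k=1..N. \<psi> j t (X i t \<omega>) (X k t \<omega>)) / real N - (\<integral>z. \<psi> j t (X i t \<omega>) z \<partial>Lw)" for j \<omega>
    have lln: "integrable M (\<lambda>\<omega>. A j \<omega> ^ 4) \<and> (\<integral>\<omega>. A j \<omega> ^ 4 \<partial>M) \<le> 112 * K^4 / (real N)^2"
      if j: "j \<in> {1..J}" for j
    proof -
      have id: "distr M borel (X k t) = Lw" if "1 \<le> k" for k
        using X_ident[OF that t] unfolding Lw_def .
      have i1: "1 \<le> i" and i2: "i \<le> N" using i by auto
      show ?thesis unfolding A_def
        by (rule lln4[OF X_indep[OF t] id psim[OF j t] psib[OF j t] i1 i2])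
    qed
    define g where "g \<omega> = L^4 * real J^3 * (\<Sum>j=1..J. A j \<omega> ^ 4)" for \<omega>
    have gint: "integrable M g" unfolding g_def
      using lln by (intro integrable_mult_right Bochner_Integration.integrable_sum) auto
    have Eg: "integral\<^sup>L M g \<le> L^4 * real J^3 * (real J * (112 * K^4 / (real N)^2))"
    proof -
      have "integral\<^sup>L M g = L^4 * real J^3 * (\<Sum>j=1..J. (\<integral>\<omega>. A j \<omega> ^ 4 \<partial>M))"
        unfolding g_def using lln by (simp add: Bochner_Integration.integral_sum)
      also have "(\<Sum>j=1..J. (\<integral>\<omega>. A j \<omega> ^ 4 \<partial>M)) \<le> (\<Sum>j=1..J. 112 * K^4 / (real N)^2)"
        using lln by (intro sum_mono) auto
      then have "L^4 * real J^3 * (\<Sum>j=1..J. (\<integral>\<omega>. A j \<omega> ^ 4 \<partial>M)) \<le> L^4 * real J^3 * (\<Sum>j=1..J. 112 * K^4 / (real N)^2)"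
        by (intro mult_left_mono) auto
      finally show ?thesis by simp
    qed
    have pw: "norm (b t (X i t \<omega>) (empirical N (\<lambda>j. X j t \<omega>)) - b t (X i t \<omega>) (distr M borel (X 1 t))) ^ 4 \<le> g \<omega>
       \<and> norm (\<sigma> t (X i t \<omega>) (empirical N (\<lambda>j. X j t \<omega>)) - \<sigma> t (X i t \<omega>) (distr M borel (X 1 t))) ^ 4 \<le> g \<omega>"
      if \<omega>: "\<omega> \<in> space M" for \<omega>
    proof -
      define x where "x = X i t \<omega>"
      define \<mu>1 where "\<mu>1 = empirical N (\<lambda>j. X j t \<omega>)"
      have xin: "x \<in> closure G" unfolding x_def using X_in i t \<omega> by auto
      have Xin: "X k t \<omega> \<in> closure G" if "k \<in> {1..N}" for k using X_in that t \<omega> by auto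
      have mu1: "\<mu>1 \<in> prob_on (closure G)" unfolding \<mu>1_def
        by (rule empirical_prob_on[OF N1 _ clG]) (use Xin in auto)
      have jb: "\<bar>(\<integral>z. \<phi> j t x z \<partial>\<mu>1) - (\<integral>z. \<phi> j t x z \<partial>Lw)\<bar> \<le> \<bar>A j \<omega>\<bar>" if j: "j \<in> {1..J}" for j
      proof -
        have "\<bar>(\<integral>z. \<phi> j t x z \<partial>\<mu>1) - (\<integral>z. \<phi> j t x z \<partial>Lw)\<bar> \<le> \<bar>(\<integral>z. \<psi> j t x z \<partial>\<mu>1) - (\<integral>z. \<psi> j t x z \<partial>Lw)\<bar>"
          by (rule cmpj[OF j t xin mu1 Lw_on])
        also have "(\<integral>z. \<psi> j t x z \<partial>\<mu>1) - (\<integral>z. \<psi> j t x z \<partial>Lw) = A j \<omega>"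
          unfolding \<mu>1_def A_def x_def by (simp add: empirical_integral[OF N1 psix[OF j t]])
        finally show ?thesis .
      qed
      have "norm (b t x \<mu>1 - b t x Lw) + norm (\<sigma> t x \<mu>1 - \<sigma> t x Lw)
          \<le> L * (dist x x + (\<Sum>j=1..J. \<bar>(\<integral>z. \<phi> j t x z \<partial>\<mu>1) - (\<integral>z. \<phi> j t x z \<partial>Lw)\<bar>))"
        by (rule lip[OF t xin xin mu1 Lw_on])
      also have "\<dots> \<le> L * (\<Sum>j=1..J. \<bar>A j \<omega>\<bar>)"
        using L_pos by (intro mult_left_mono) (auto intro!: sum_mono jb)
      finally have S: "norm (b t x \<mu>1 - b t x Lw) + norm (\<sigma> t x \<mu>1 - \<sigma> t x Lw) \<le> L * (\<Sum>j=1..J. \<bar>A j \<omega>\<bar>)" .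
      define Q where "Q = L * (\<Sum>j=1..J. \<bar>A j \<omega>\<bar>)"
      have Q4: "Q ^ 4 \<le> g \<omega>"
      proof -
        have "Q ^ 4 = L^4 * (\<Sum>j=1..J. \<bar>A j \<omega>\<bar>) ^ 4" by (simp add: Q_def power_mult_distrib)
        also have "\<dots> \<le> L^4 * (real J ^ 3 * (\<Sum>j=1..J. \<bar>A j \<omega>\<bar> ^ 4))"
          using pow4_sum[of "{1..J}" "\<lambda>j. \<bar>A j \<omega>\<bar>"] by (intro mult_left_mono) auto
        also have "\<dots> = g \<omega>" by (simp add: g_def)
        finally show ?thesis .
      qed
      have "norm (b t x \<mu>1 - b t x Lw) \<le> Q"
        using S norm_ge_zero[of "\<sigma> t x \<mu>1 - \<sigma> t x Lw"] unfolding Q_def by linarith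
      then have 1: "norm (b t x \<mu>1 - b t x Lw) ^ 4 \<le> Q ^ 4" by (intro power_mono) auto
      have "norm (\<sigma> t x \<mu>1 - \<sigma> t x Lw) \<le> Q"
        using S norm_ge_zero[of "b t x \<mu>1 - b t x Lw"] unfolding Q_def by linarith
      then have 2: "norm (\<sigma> t x \<mu>1 - \<sigma> t x Lw) ^ 4 \<le> Q ^ 4" by (intro power_mono) auto
      show ?thesis using 1 2 Q4 by (simp add: x_def \<mu>1_def Lw_def)
    qed
    have "(\<integral>\<omega>. norm (b t (X i t \<omega>) (empirical N (\<lambda>j. X j t \<omega>))
                 - b t (X i t \<omega>) (distr M borel (X 1 t))) ^ 4 \<partial>M) \<le> integral\<^sup>L M g"
      by (rule integral_le_nonint[OF gint]) (use pw in auto)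
    moreover have "(\<integral>\<omega>. norm (\<sigma> t (X i t \<omega>) (empirical N (\<lambda>j. X j t \<omega>))
                 - \<sigma> t (X i t \<omega>) (distr M borel (X 1 t))) ^ 4 \<partial>M) \<le> integral\<^sup>L M g"
      by (rule integral_le_nonint[OF gint]) (use pw in auto)
    moreover have "2 * (L^4 * real J^3 * (real J * (112 * K^4 / (real N)^2))) = C2 / (real N)^2"
      by (simp add: C2_def field_simps eval_nat_numeral)
    ultimately show ?thesis using Eg by linarith
  qed

  have C10: "0 \<le> C1" unfolding C1_def by (simp add: Cp0)
  have C20: "0 \<le> C2" unfolding C2_def using K0 by simp
  show ?thesis
  proof (intro exI[of _ "C1 + C2 + 1"] conjI allI impI ballI)
    show "0 < C1 + C2 + 1" using C10 C20 by linarith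
  next
    fix N :: nat and t :: real and i :: nat assume N1: "1 \<le> N" and t: "t \<in> {0..T}" and i: "i \<in> {1..N}"
    have nn: "0 \<le> (\<integral>\<omega>. norm (XN N i t \<omega> - X i t \<omega>) ^ 4 \<partial>M)
          + (1 / real N) * (\<Sum>j=1..N. \<integral>\<omega>. norm (XN N j t \<omega> - X j t \<omega>) ^ 4 \<partial>M)"
      by (intro add_nonneg_nonneg mult_nonneg_nonneg sum_nonneg Bochner_Integration.integral_nonneg) auto
    show "(\<integral>\<omega>. norm (b t (XN N i t \<omega>) (empirical N (\<lambda>j. XN N j t \<omega>))
                 - b t (X i t \<omega>) (empirical N (\<lambda>j. X j t \<omega>))) ^ 4 \<partial>M)
   + (\<integral>\<omega>. norm (\<sigma> t (XN N i t \<omega>) (empirical N (\<lambda>j. XN N j t \<omega>))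
                 - \<sigma> t (X i t \<omega>) (empirical N (\<lambda>j. X j t \<omega>))) ^ 4 \<partial>M)
   \<le> (C1 + C2 + 1) * ((\<integral>\<omega>. norm (XN N i t \<omega> - X i t \<omega>) ^ 4 \<partial>M)
          + (1 / real N) * (\<Sum>j=1..N. \<integral>\<omega>. norm (XN N j t \<omega> - X j t \<omega>) ^ 4 \<partial>M))"
      using part1[OF N1 t i] mult_right_mono[OF _ nn, of C1 "C1 + C2 + 1"] C20 by linarith
    have "C2 / (real N)^2 \<le> (C1 + C2 + 1) / (real N)^2"
      using C10 by (intro divide_right_mono) auto
    then show "(\<integral>\<omega>. norm (b t (X i t \<omega>) (empirical N (\<lambda>j. X j t \<omega>))
                 - b t (X i t \<omega>) (distr M borel (X 1 t))) ^ 4 \<partial>M)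
   + (\<integral>\<omega>. norm (\<sigma> t (X i t \<omega>) (empirical N (\<lambda>j. X j t \<omega>))
                 - \<sigma> t (X i t \<omega>) (distr M borel (X 1 t))) ^ 4 \<partial>M)
   \<le> (C1 + C2 + 1) / (real N) ^ 2"
      using part2[OF N1 t i] by linarith
  qed
qed

end
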